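(* For integers $n,m$ and $y=(y_1,y_2,y_3)\in Q$, \[\Phi_{n,m;y}(u,v;1,1;z,w;q)=\Delta_y(z,w;q)\,\frac{\Phi_{n,m;y}(u,v;z,w;q)-zwq^{m+y_1-1}\Phi_{n,m;y}(uq^{-y_{12}}/z,\,vq^{-y_{23}}/w;z,w;q)}{1-zwq^{-1}}.\]
   Context: $Q=\{y\in\mathbb{Z}^3:y_1+y_2+y_3=0\}$, $y_{ij}:=y_i-y_j$. For $n\in\mathbb{Z}$, $(a;q)_n=(a;q)_\infty/(aq^n;q)_\infty$ ($1/(q;q)_n=0$ for $n<0$), $(a_1,\dots,a_k;q)_n=\prod_i(a_i;q)_n$. $\Phi_{n,m}(z,w;q):=\frac{(zwq;q)_{n+m}}{(q,zq,zwq;q)_n(q,wq,zwq;q)_m}$; $\Phi_{n,m}(u,v;z,w;q):=\Phi_{n,m}(z/q,w;q)-\frac{uz}{(z;q)_2}\Phi_{n-1,m}(zq,w/q;q)+\frac{uvzw^2}{(w,zw;q)_2}\Phi_{n-1,m-1}(z,wq;q)$; $\Phi_{n,m;y}(z,w;q):=\frac{(zwq;q)_{n+m}}{(q;q)_{n-y_1}(zq;q)_{n-y_2}(zwq;q)_{n-y_3}(q;q)_{m+y_3}(wq;q)_{m+y_2}(zwq;q)_{m+y_1}}$; $\Phi_{n,m;y}(u,v;z,w;q):=\frac{\Phi_{n-y_1,m-y_1-y_2}(u,v;zq^{y_{12}},wq^{y_{23}};q)}{(zq;q)_{y_{12}}(wq;q)_{y_{23}}(zwq;q)_{y_{13}}}$.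 With $\rho=(1,2,3)$, $\sigma\in S_3$ in one-line notation and $\chi$ the indicator, $\Phi_{n,m}(u,v;c,d;z,w;q):=\sum_{\sigma\in S_3}\operatorname{sgn}(\sigma)(uz)^{\sigma_1-1}(v/d)^{\chi(\sigma_3=1)}(c/u)^{\chi(\sigma_1=3)}(dw)^{3-\sigma_3}\Phi_{n,m;\sigma-\rho}(z/q,w/q;q)$, and \[\Phi_{n,m;y}(u,v;c,d;z,w;q):=\frac{\Phi_{n-y_1,m-y_1-y_2}(u,v;c,d;zq^{y_{12}},wq^{y_{23}};q)}{(z;q)_{y_{12}}(w;q)_{y_{23}}(zw/q;q)_{y_{13}}}.\] Finally $\Delta_y(z,w;q):=\frac{(1-zq^{y_{12}})(1-wq^{y_{23}})(1-zwq^{y_{13}})}{(1-z)(1-w)(1-zw)}$. *)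

theory Defs
  imports Complex_Main "HOL-Combinatorics.Permutations"
begin

text \<open>q-Pochhammer symbol (a;q)_n for integer n, via (a;q)_n = (a;q)_inf/(aq^n;q)_inf.  With Isabelle's convention
  x/0 = 0, this automatically gives 1/(q;q)_n = 0 for n < 0.\<close>
definition qpoch :: "complex \<Rightarrow> complex \<Rightarrow> int \<Rightarrow> complex" where
  "qpoch a q n =
     (if 0 \<le> n then (\<Prod>k<nat n. 1 - a * q ^ k)
      else 1 / (\<Prod>k\<in>{1..nat (- n)}. 1 - a / q ^ k))"

definition Phi0 :: "int \<Rightarrow> int \<Rightarrow> complex \<Rightarrow> complex \<Rightarrow> complex \<Rightarrow> complex" where
  "Phi0 n m z w q =
     qpoch (z*w*q) q (n+m) /
     (qpoch q q n * qpoch (z*q) q n * qpoch (z*w*q) q n *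
      qpoch q q m * qpoch (w*q) q m * qpoch (z*w*q) q m)"

definition PhiUV :: "complex \<Rightarrow> complex \<Rightarrow> int \<Rightarrow> int \<Rightarrow> complex \<Rightarrow> complex \<Rightarrow> complex \<Rightarrow> complex" where
  "PhiUV u v n m z w q =
     Phi0 n m (z/q) w q
     - u*z / qpoch z q 2 * Phi0 (n-1) m (z*q) (w/q) q
     + u*v*z*w^2 / (qpoch w q 2 * qpoch (z*w) q 2) * Phi0 (n-1) (m-1) z (w*q) q"

definition Phi0y :: "int \<Rightarrow> int \<Rightarrow> int \<Rightarrow> int \<Rightarrow> int \<Rightarrow> complex \<Rightarrow> complex \<Rightarrow> complex \<Rightarrow> complex" where
  "Phi0y n m y1 y2 y3 z w q =
     qpoch (z*w*q) q (n+m) /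
     (qpoch q q (n-y1) * qpoch (z*q) q (n-y2) * qpoch (z*w*q) q (n-y3) *
      qpoch q q (m+y3) * qpoch (w*q) q (m+y2) * qpoch (z*w*q) q (m+y1))"

definition PhiUVy :: "complex \<Rightarrow> complex \<Rightarrow> int \<Rightarrow> int \<Rightarrow> int \<Rightarrow> int \<Rightarrow> int \<Rightarrow>
    complex \<Rightarrow> complex \<Rightarrow> complex \<Rightarrow> complex" where
  "PhiUVy u v n m y1 y2 y3 z w q =
     PhiUV u v (n-y1) (m-y1-y2) (z * q powi (y1-y2)) (w * q powi (y2-y3)) q /
     (qpoch (z*q) q (y1-y2) * qpoch (w*q) q (y2-y3) * qpoch (z*w*q) q (y1-y3))"

definition PhiCD :: "complex \<Rightarrow> complex \<Rightarrow> complex \<Rightarrow> complex \<Rightarrow> int \<Rightarrow> int \<Rightarrow>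
    complex \<Rightarrow> complex \<Rightarrow> complex \<Rightarrow> complex" where
  "PhiCD u v c d n m z w q =
     (\<Sum>\<sigma> | \<sigma> permutes {1::nat,2,3}.
        of_int (sign \<sigma>) * (u*z) ^ (\<sigma> 1 - 1)
        * (v/d) ^ (if \<sigma> 3 = 1 then 1 else 0)
        * (c/u) ^ (if \<sigma> 1 = 3 then 1 else 0)
        * (d*w) ^ (3 - \<sigma> 3)
        * Phi0y n m (int (\<sigma> 1) - 1) (int (\<sigma> 2) - 2) (int (\<sigma> 3) - 3) (z/q) (w/q) q)"

definition PhiCDy :: "complex \<Rightarrow> complex \<Rightarrow> complex \<Rightarrow> complex \<Rightarrow> int \<Rightarrow> int \<Rightarrow>
    int \<Rightarrow> int \<Rightarrow> int \<Rightarrow> complex \<Rightarrow> complex \<Rightarrow> complex \<Rightarrow> complex" where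
  "PhiCDy u v c d n m y1 y2 y3 z w q =
     PhiCD u v c d (n-y1) (m-y1-y2) (z * q powi (y1-y2)) (w * q powi (y2-y3)) q /
     (qpoch z q (y1-y2) * qpoch w q (y2-y3) * qpoch (z*w/q) q (y1-y3))"

definition Delta :: "int \<Rightarrow> int \<Rightarrow> int \<Rightarrow> complex \<Rightarrow> complex \<Rightarrow> complex \<Rightarrow> complex" where
  "Delta y1 y2 y3 z w q =
     (1 - z * q powi (y1-y2)) * (1 - w * q powi (y2-y3)) * (1 - z*w * q powi (y1-y3)) /
     ((1 - z) * (1 - w) * (1 - z*w))"

end

theory Submission
  imports Defs
begin



definition gen :: "complex \<Rightarrow> complex \<Rightarrow> bool" where
  "gen a q \<longleftrightarrow> (\<forall>j::int. a * q powi j \<noteq> 1)"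

lemma qpoch_neg: "qpoch a q (- int j) = 1 / (\<Prod>k\<in>{1..j}. 1 - a / q ^ k)"
  by (cases "j = 0") (simp_all add: qpoch_def)

lemma qpoch_nonneg: "qpoch a q (int j) = (\<Prod>k<j. 1 - a * q ^ k)"
  by (simp add: qpoch_def)

lemma qpoch_succ:
  assumes g: "gen a q" and q: "q \<noteq> 0"
  shows "qpoch a q (k+1) = qpoch a q k * (1 - a * q powi k)"
proof (cases "k \<ge> 0")
  case True
  define j where "j = nat k"
  have j: "k = int j" using True j_def by simp
  have k1: "k + 1 = int (Suc j)" using j by simp
  have "qpoch a q (int (Suc j)) = qpoch a q (int j) * (1 - a * q ^ j)"
    unfolding qpoch_nonneg by simp
  moreover have "q powi k = q ^ j" using j by simp
  ultimately show ?thesis using j k1 by (simp add: add.commute)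
next
  case False
  define j where "j = nat (-k) - 1"
  have j: "k = - int (Suc j)" using False j_def by simp
  have k1: "k + 1 = - int j" using j by simp
  have pk0: "q powi k = inverse (q ^ Suc j)" unfolding j power_int_minus by (simp only: power_int_of_nat)
  have pk: "a * q powi k = a / q ^ Suc j" unfolding pk0 by (simp add: divide_inverse)
  have ne: "1 - a / q ^ Suc j \<noteq> 0"
    using g pk unfolding gen_def by (metis eq_iff_diff_eq_0)
  have "qpoch a q (- int j) = qpoch a q (- int (Suc j)) * (1 - a / q ^ Suc j)"
    unfolding qpoch_neg using ne by (simp add: prod.nat_ivl_Suc')
  then show ?thesis using k1 j pk by simp
qed

lemma gen_mult: "gen a q \<Longrightarrow> q \<noteq> 0 \<Longrightarrow> gen (a * q powi i) q"
  unfolding gen_def by (metis mult.assoc power_int_add)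

lemma gen_q: "gen a q \<Longrightarrow> q \<noteq> 0 \<Longrightarrow> gen (a * q) q"
  using gen_mult[of a q 1] by simp

lemma gen_one: "gen a q \<Longrightarrow> a \<noteq> 1"
  unfolding gen_def by (metis mult.right_neutral power_int_0_right)

lemma qpoch_pred:
  assumes g: "gen a q" and q: "q \<noteq> 0"
  shows "qpoch a q (k - 1) = qpoch a q k / (1 - a * q powi (k - 1))"
proof -
  have ne: "1 - a * q powi (k - 1) \<noteq> 0" using g unfolding gen_def by (metis eq_iff_diff_eq_0)
  have "qpoch a q k = qpoch a q (k - 1) * (1 - a * q powi (k - 1))"
    using qpoch_succ[OF g q, of "k - 1"] by simp
  then show ?thesis using ne by simp
qed

lemma qpoch_nz:
  assumes g: "gen a q" and q: "q \<noteq> 0"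
  shows "qpoch a q k \<noteq> 0"
proof (induction k rule: int_induct[where k=0])
  case base then show ?case by (simp add: qpoch_def)
next
  case (step1 i)
  have ne: "1 - a * q powi i \<noteq> 0" using g unfolding gen_def by (metis eq_iff_diff_eq_0)
  show ?case using step1 ne qpoch_succ[OF g q, of i] by simp
next
  case (step2 i)
  have ne: "1 - a * q powi (i-1) \<noteq> 0" using g unfolding gen_def by (metis eq_iff_diff_eq_0)
  show ?case using step2 ne qpoch_pred[OF g q, of i] by simp
qed

lemma qpoch_shift:
  assumes g: "gen a q" and q: "q \<noteq> 0"
  shows "qpoch (a * q) q k = qpoch a q (k + 1) / (1 - a)"
proof -
  have g': "gen (a*q) q" using gen_q[OF g q] .
  have a1: "1 - a \<noteq> 0" using gen_one[OF g] by simp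
  have "qpoch (a * q) q k * (1 - a) = qpoch a q (k + 1)"
  proof (induction k rule: int_induct[where k=0])
    case base then show ?case by (simp add: qpoch_def)
  next
    case (step1 i)
    have "qpoch (a * q) q (i + 1) * (1 - a) = (qpoch (a * q) q i * (1 - a)) * (1 - a * q * q powi i)"
      unfolding qpoch_succ[OF g' q, of i] by (simp only: mult_ac)
    also have "\<dots> = qpoch a q (i + 1) * (1 - a * q powi (i+1))"
      unfolding step1 using q by (simp add: power_int_add mult_ac)
    also have "\<dots> = qpoch a q (i + 1 + 1)" using qpoch_succ[OF g q, of "i+1"] by simp
    finally show ?case .
  next
    case (step2 i)
    have ne: "1 - a * q * q powi (i-1) \<noteq> 0" using g' unfolding gen_def by (metis eq_iff_diff_eq_0)
    have "qpoch (a * q) q (i - 1) * (1 - a) = (qpoch (a * q) q i * (1 - a)) / (1 - a * q * q powi (i-1))"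
      using qpoch_pred[OF g' q, of i] by (simp add: algebra_simps)
    also have "\<dots> = qpoch a q (i + 1) / (1 - a * q powi i)"
      unfolding step2 using q by (simp add: power_int_diff mult_ac)
    also have "\<dots> = qpoch a q (i - 1 + 1)" using qpoch_pred[OF g q, of "i+1"] by simp
    finally show ?case .
  qed
  then show ?thesis using a1 by (simp add: eq_divide_eq)
qed

lemma qpochq_rec:
  assumes q: "q \<noteq> 0" and hq: "\<And>k::int. k \<noteq> 0 \<Longrightarrow> q powi k \<noteq> 1"
  shows "inverse (qpoch q q k) = inverse (qpoch q q (k+1)) * (1 - q powi (k+1))"
proof (cases "k \<ge> 0")
  case True
  define j where "j = nat k"
  have j: "k = int j" using True j_def by simp
  have k1: "k + 1 = int (Suc j)" using j by simp
  have e: "qpoch q q (int (Suc j)) = qpoch q q (int j) * (1 - q ^ Suc j)"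
    unfolding qpoch_nonneg by simp
  have ne: "1 - q ^ Suc j \<noteq> 0" using hq[of "int (Suc j)"] by (simp del: of_nat_Suc)
  show ?thesis unfolding k1 unfolding j e using ne
    by (simp del: of_nat_Suc add: power_int_of_nat)
next
  case False
  then have "k \<le> -1" by simp
  then have z1: "qpoch q q k = 0"
  proof -
    define j where "j = nat (-k)"
    have j: "k = - int j" "j \<ge> 1" using \<open>k \<le> -1\<close> j_def by auto
    have "(\<Prod>i\<in>{1..j}. 1 - q / q ^ i) = 0"
      using j(2) q by (intro prod_zero) (auto intro!: bexI[of _ 1])
    then show ?thesis unfolding j qpoch_neg by simp
  qed
  show ?thesis
  proof (cases "k = -1")
    case True then show ?thesis using z1 by simp
  next
    case False
    then have "k + 1 \<le> -1" using \<open>k \<le> -1\<close> by simp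
    then have z2: "qpoch q q (k+1) = 0"
    proof -
      define j where "j = nat (-(k+1))"
      have j: "k+1 = - int j" "j \<ge> 1" using \<open>k+1 \<le> -1\<close> j_def by auto
      have "(\<Prod>i\<in>{1..j}. 1 - q / q ^ i) = 0"
        using j(2) q by (intro prod_zero) (auto intro!: bexI[of _ 1])
      then show ?thesis unfolding j qpoch_neg by simp
    qed
    show ?thesis using z1 z2 by simp
  qed
qed

lemma perm3_sum:
  fixes f :: "(nat \<Rightarrow> nat) \<Rightarrow> complex"
  shows "sum f {p. p permutes {1::nat,2,3}} =
     f (transpose 1 1 \<circ> (transpose 2 2 \<circ> (transpose 3 3 \<circ> id))) + f (transpose 1 1 \<circ> (transpose 2 3 \<circ> (transpose 3 3 \<circ> id)))
   + f (transpose 1 2 \<circ> (transpose 2 2 \<circ> (transpose 3 3 \<circ> id))) + f (transpose 1 2 \<circ> (transpose 2 3 \<circ> (transpose 3 3 \<circ> id)))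
   + f (transpose 1 3 \<circ> (transpose 2 2 \<circ> (transpose 3 3 \<circ> id))) + f (transpose 1 3 \<circ> (transpose 2 3 \<circ> (transpose 3 3 \<circ> id)))"
  by (simp add: sum_over_permutations_insert add.assoc)

lemma PhiCD_expand:
  "PhiCD u v c d n m z w q =
      Phi0y n m 0 0 0 (z/q) (w/q) q
    - (d*w) * Phi0y n m 0 1 (-1) (z/q) (w/q) q
    - (u*z) * Phi0y n m 1 (-1) 0 (z/q) (w/q) q
    + (u*z) * (v/d) * (d*w)^2 * Phi0y n m 1 1 (-2) (z/q) (w/q) q
    + (u*z)^2 * (c/u) * (d*w) * Phi0y n m 2 (-1) (-1) (z/q) (w/q) q
    - (u*z)^2 * (v/d) * (c/u) * (d*w)^2 * Phi0y n m 2 0 (-2) (z/q) (w/q) q"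
  unfolding PhiCD_def perm3_sum
  by (simp add: sign_compose permutation_swap_id permutation_compose sign_swap_id transpose_def algebra_simps)

lemma qpoch2: "qpoch a q 2 = (1 - a) * (1 - a * q)"
  by (simp add: qpoch_def numeral_2_eq_2)

lemma qq2:
  assumes q: "q \<noteq> 0" and hq: "\<And>k::int. k \<noteq> 0 \<Longrightarrow> q powi k \<noteq> 1"
  shows "inverse (qpoch q q (k - 2)) = inverse (qpoch q q k) * (1 - q powi k) * (1 - q powi (k - 1))"
    "inverse (qpoch q q (k - 1)) = inverse (qpoch q q k) * (1 - q powi k)"
  using qpochq_rec[OF q hq, of "k-2"] qpochq_rec[OF q hq, of "k-1"] by (simp_all add: mult_ac)

lemma gen_nz: "gen a q \<Longrightarrow> 1 - a * q powi k \<noteq> 0"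
  unfolding gen_def by (metis eq_iff_diff_eq_0)

lemma core2:
  assumes q0: "q \<noteq> 0" and hq: "\<And>k::int. k \<noteq> 0 \<Longrightarrow> q powi k \<noteq> 1"
    and gZ: "gen Z q" and gW: "gen W q" and gZW: "gen (Z*W) q" and Z0: "Z \<noteq> 0" and W0: "W \<noteq> 0"
  shows "PhiCD u v 1 1 N M Z W q * (1 - Z*W/q) =
         PhiUV u v N M Z W q - Z*W*q powi (M-1) * PhiUV (u/Z) (v/W) N M Z W q"
proof -
  have gE: "gen (Z*W/q) q" using gen_mult[OF gZW q0, of "-1"] by (simp add: divide_inverse)
  have gZq: "gen (Z*q) q" using gen_q[OF gZ q0] .
  have gWq: "gen (W*q) q" using gen_q[OF gW q0] .
  have gZWq: "gen (Z*W*q) q" using gen_q[OF gZW q0] .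
  have eE: "\<And>k. qpoch (Z*W/q) q k = (1 - Z*W/q) * qpoch (Z*W) q (k - 1)"
    using qpoch_shift[OF gE q0] q0 gen_one[OF gE] by (simp add: field_simps)
  have args: "Z/q*(W/q)*q = Z*W/q" "Z/q*q = Z" "W/q*q = W" "Z/q*W*q = Z*W"
     "Z*q*(W/q)*q = Z*W*q" "Z*(W*q)*q = Z*W*q*q" using q0 by (simp_all add: field_simps)
  have uu: "(u*Z)^2 * (1/u) = u*Z^2" "\<And>x. (u*Z)^2 * x * (1/u) = u*Z^2 * x"
     "u/Z*Z = u" "u/Z*(v/W)*Z*W^2 = u*v*W" using Z0 W0
    by (auto simp: power2_eq_square field_simps)
  note sh = qpoch_shift[OF gZ q0] qpoch_shift[OF gW q0] qpoch_shift[OF gZW q0]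
     qpoch_shift[OF gZq q0] qpoch_shift[OF gWq q0] qpoch_shift[OF gZWq q0]
  have idx: "N + 1 - 1 = N" "N + 2 - 1 = N + 1" "M + 1 - 1 = M" "M + 2 - 1 = M + 1"
    "N - 1 + M + 1 = N + M" "N - 1 + 1 + 1 = N + 1" "N - 1 + 1 = N"
    "N - 1 + (M - 1) + 1 + 1 = N + M" "M - 1 + 1 + 1 = M + 1" by simp_all
  note sp = qpoch_succ[OF gZ q0] qpoch_pred[OF gZ q0] qpoch_succ[OF gW q0] qpoch_pred[OF gW q0]
       qpoch_succ[OF gZW q0] qpoch_pred[OF gZW q0]
  have qqa: "\<And>k. inverse (qpoch q q (k - 2)) = inverse (qpoch q q k) * (1 - q powi k) * (1 - q powi (k - 1))"
    by (rule qq2(1)[OF q0 hq])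
  have qqb: "\<And>k. inverse (qpoch q q (k - 1)) = inverse (qpoch q q k) * (1 - q powi k)"
    by (rule qq2(2)[OF q0 hq])
  obtain X where X: "q powi N = X" by blast
  obtain Y where Y: "q powi M = Y" by blast
  obtain RN where RN: "inverse (qpoch q q N) = RN" by blast
  obtain RM where RM: "inverse (qpoch q q M) = RM" by blast
  obtain A where A: "qpoch Z q N = A" by blast
  obtain B where B: "qpoch W q M = B" by blast
  obtain C where C: "qpoch (Z*W) q N = C" by blast
  obtain D where D: "qpoch (Z*W) q M = D" by blast
  obtain P where P: "qpoch (Z*W) q (N+M) = P" by blast
  have A0: "A \<noteq> 0" using A qpoch_nz[OF gZ q0] by blast
  have B0: "B \<noteq> 0" using B qpoch_nz[OF gW q0] by blast
  have C0: "C \<noteq> 0" using C qpoch_nz[OF gZW q0] by blast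
  have D0: "D \<noteq> 0" using D qpoch_nz[OF gZW q0] by blast
  have pw: "q powi (N - 1) = X / q" "q powi (M - 1) = Y / q" "q powi (N + M - 1) = X * Y / q"
    using X Y q0 by (simp_all add: power_int_diff power_int_add)
  have nz: "1 - Z*W*inverse q \<noteq> 0" "1 - Z*W*(X*Y/q) \<noteq> 0" "1 - Z*W*(X/q) \<noteq> 0" "1 - Z*W*(Y/q) \<noteq> 0" "1 - Z*(X/q) \<noteq> 0" "1 - W*(Y/q) \<noteq> 0" "1 - Z*X \<noteq> 0" "1 - W*Y \<noteq> 0" "1 - Z*W*X \<noteq> 0" "1 - Z*W*Y \<noteq> 0" "1 - Z \<noteq> 0" "1 - Z*q \<noteq> 0" "1 - W \<noteq> 0" "1 - W*q \<noteq> 0" "1 - Z*W \<noteq> 0" "1 - Z*W*q \<noteq> 0"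
    using gen_nz[OF gZW, of "-1"] gen_nz[OF gZW, of "N+M-1"] gen_nz[OF gZW, of "N-1"] gen_nz[OF gZW, of "M-1"] gen_nz[OF gZ, of "N-1"] gen_nz[OF gW, of "M-1"] gen_nz[OF gZ, of "N"] gen_nz[OF gW, of "M"] gen_nz[OF gZW, of "N"] gen_nz[OF gZW, of "M"] gen_nz[OF gZ, of 0] gen_nz[OF gZ, of 1] gen_nz[OF gW, of 0] gen_nz[OF gW, of 1] gen_nz[OF gZW, of 0] gen_nz[OF gZW, of 1]
    unfolding pw X Y by (simp_all add: power_int_minus)
  obtain g0 where g0: "1 - Z*W*inverse q = g0" by blast
  obtain g1 where g1: "1 - Z*W*(X*Y/q) = g1" by blast
  obtain g2 where g2: "1 - Z*W*(X/q) = g2" by blast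
  obtain g3 where g3: "1 - Z*W*(Y/q) = g3" by blast
  obtain g4 where g4: "1 - Z*(X/q) = g4" by blast
  obtain g5 where g5: "1 - W*(Y/q) = g5" by blast
  obtain g6 where g6: "1 - Z*X = g6" by blast
  obtain g7 where g7: "1 - W*Y = g7" by blast
  obtain g8 where g8: "1 - Z*W*X = g8" by blast
  obtain g9 where g9: "1 - Z*W*Y = g9" by blast
  obtain g10 where g10: "1 - Z = g10" by blast
  obtain g11 where g11: "1 - Z*q = g11" by blast
  obtain g12 where g12: "1 - W = g12" by blast
  obtain g13 where g13: "1 - W*q = g13" by blast
  obtain g14 where g14: "1 - Z*W = g14" by blast
  obtain g15 where g15: "1 - Z*W*q = g15" by blast
  obtain g16 where g16: "1 - X = g16" by blast
  obtain g17 where g17: "1 - Y = g17" by blast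
  obtain g18 where g18: "1 - X/q = g18" by blast
  obtain g19 where g19: "1 - Y/q = g19" by blast
  have gnz: "g0 \<noteq> 0" "g1 \<noteq> 0" "g2 \<noteq> 0" "g3 \<noteq> 0" "g4 \<noteq> 0" "g5 \<noteq> 0" "g6 \<noteq> 0" "g7 \<noteq> 0" "g8 \<noteq> 0" "g9 \<noteq> 0" "g10 \<noteq> 0" "g11 \<noteq> 0" "g12 \<noteq> 0" "g13 \<noteq> 0" "g14 \<noteq> 0" "g15 \<noteq> 0" using nz by (simp_all only: g0 g1 g2 g3 g4 g5 g6 g7 g8 g9 g10 g11 g12 g13 g14 g15 g16 g17 g18 g19 not_False_eq_True)
  have i0: "Phi0y N M 0 0 0 (Z/q) (W/q) q = (P*RN*RM/(A*B*C*D)) * (1*1*1*(1-Z*W*q powi (N-1))*1*(1-Z*W*q powi (M-1))/((1-Z*W*inverse q)*(1-Z*W*q powi (N+M-1))))"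
    unfolding Phi0y_def args
    apply (simp only: diff_0_right add_0_right diff_minus_eq_add add_uminus_conv_diff)?
    apply (simp only: eE sh qpoch2)?
    apply (simp only: idx)?
    apply (simp only: divide_inverse inverse_mult_distrib)?
    apply (simp only: sp)?
    apply (simp only: qqa qqb)?
    apply (simp only: X Y RN RM A B C D P pw)?
    apply (simp only: g0 g1 g2 g3 g4 g5 g6 g7 g8 g9 g10 g11 g12 g13 g14 g15 g16 g17 g18 g19)
    using gnz A0 B0 C0 D0 q0 Z0 W0
    by (simp add: field_simps)
  have i1: "Phi0y N M 0 1 (-1) (Z/q) (W/q) q = (P*RN*RM/(A*B*C*D)) * (1*(1-q powi M)*(1-Z*q powi (N-1))*1*1/(1-W*q powi M)*(1-Z*W*q powi (M-1))/((1-Z*W*inverse q)*(1-Z*W*q powi (N+M-1))))"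
    unfolding Phi0y_def args
    apply (simp only: diff_0_right add_0_right diff_minus_eq_add add_uminus_conv_diff)?
    apply (simp only: eE sh qpoch2)?
    apply (simp only: idx)?
    apply (simp only: divide_inverse inverse_mult_distrib)?
    apply (simp only: sp)?
    apply (simp only: qqa qqb)?
    apply (simp only: X Y RN RM A B C D P pw)?
    apply (simp only: g0 g1 g2 g3 g4 g5 g6 g7 g8 g9 g10 g11 g12 g13 g14 g15 g16 g17 g18 g19)
    using gnz A0 B0 C0 D0 q0 Z0 W0
    by (simp add: field_simps)
  have i2: "Phi0y N M 1 (-1) 0 (Z/q) (W/q) q = (P*RN*RM/(A*B*C*D)) * ((1-q powi N)*1*1/(1-Z*q powi N)*(1-Z*W*q powi (N-1))*(1-W*q powi (M-1))*1/((1-Z*W*inverse q)*(1-Z*W*q powi (N+M-1))))"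
    unfolding Phi0y_def args
    apply (simp only: diff_0_right add_0_right diff_minus_eq_add add_uminus_conv_diff)?
    apply (simp only: eE sh qpoch2)?
    apply (simp only: idx)?
    apply (simp only: divide_inverse inverse_mult_distrib)?
    apply (simp only: sp)?
    apply (simp only: qqa qqb)?
    apply (simp only: X Y RN RM A B C D P pw)?
    apply (simp only: g0 g1 g2 g3 g4 g5 g6 g7 g8 g9 g10 g11 g12 g13 g14 g15 g16 g17 g18 g19)
    using gnz A0 B0 C0 D0 q0 Z0 W0
    by (simp add: field_simps)
  have i3: "Phi0y N M 1 1 (-2) (Z/q) (W/q) q = (P*RN*RM/(A*B*C*D)) * ((1-q powi N)*(1-q powi M)*(1-q powi (M-1))*(1-Z*q powi (N-1))*1/(1-Z*W*q powi N)*1/(1-W*q powi M)*1/((1-Z*W*inverse q)*(1-Z*W*q powi (N+M-1))))"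
    unfolding Phi0y_def args
    apply (simp only: diff_0_right add_0_right diff_minus_eq_add add_uminus_conv_diff)?
    apply (simp only: eE sh qpoch2)?
    apply (simp only: idx)?
    apply (simp only: divide_inverse inverse_mult_distrib)?
    apply (simp only: sp)?
    apply (simp only: qqa qqb)?
    apply (simp only: X Y RN RM A B C D P pw)?
    apply (simp only: g0 g1 g2 g3 g4 g5 g6 g7 g8 g9 g10 g11 g12 g13 g14 g15 g16 g17 g18 g19)
    using gnz A0 B0 C0 D0 q0 Z0 W0
    by (simp add: field_simps)
  have i4: "Phi0y N M 2 (-1) (-1) (Z/q) (W/q) q = (P*RN*RM/(A*B*C*D)) * ((1-q powi N)*(1-q powi (N-1))*(1-q powi M)*1/(1-Z*q powi N)*1*(1-W*q powi (M-1))*1/(1-Z*W*q powi M)/((1-Z*W*inverse q)*(1-Z*W*q powi (N+M-1))))"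
    unfolding Phi0y_def args
    apply (simp only: diff_0_right add_0_right diff_minus_eq_add add_uminus_conv_diff)?
    apply (simp only: eE sh qpoch2)?
    apply (simp only: idx)?
    apply (simp only: divide_inverse inverse_mult_distrib)?
    apply (simp only: sp)?
    apply (simp only: qqa qqb)?
    apply (simp only: X Y RN RM A B C D P pw)?
    apply (simp only: g0 g1 g2 g3 g4 g5 g6 g7 g8 g9 g10 g11 g12 g13 g14 g15 g16 g17 g18 g19)
    using gnz A0 B0 C0 D0 q0 Z0 W0
    by (simp add: field_simps)
  have i5: "Phi0y N M 2 0 (-2) (Z/q) (W/q) q = (P*RN*RM/(A*B*C*D)) * ((1-q powi N)*(1-q powi (N-1))*(1-q powi M)*(1-q powi (M-1))*1*1/(1-Z*W*q powi N)*1*1/(1-Z*W*q powi M)/((1-Z*W*inverse q)*(1-Z*W*q powi (N+M-1))))"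
    unfolding Phi0y_def args
    apply (simp only: diff_0_right add_0_right diff_minus_eq_add add_uminus_conv_diff)?
    apply (simp only: eE sh qpoch2)?
    apply (simp only: idx)?
    apply (simp only: divide_inverse inverse_mult_distrib)?
    apply (simp only: sp)?
    apply (simp only: qqa qqb)?
    apply (simp only: X Y RN RM A B C D P pw)?
    apply (simp only: g0 g1 g2 g3 g4 g5 g6 g7 g8 g9 g10 g11 g12 g13 g14 g15 g16 g17 g18 g19)
    using gnz A0 B0 C0 D0 q0 Z0 W0
    by (simp add: field_simps)
  have i6: "Phi0 N M (Z/q) W q = (P*RN*RM/(A*B*C*D)) * ((1-W)/(1-W*q powi M))"
    unfolding Phi0_def args
    apply (simp only: diff_0_right add_0_right diff_minus_eq_add add_uminus_conv_diff)?
    apply (simp only: eE sh qpoch2)?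
    apply (simp only: idx)?
    apply (simp only: divide_inverse inverse_mult_distrib)?
    apply (simp only: sp)?
    apply (simp only: qqa qqb)?
    apply (simp only: X Y RN RM A B C D P pw)?
    apply (simp only: g0 g1 g2 g3 g4 g5 g6 g7 g8 g9 g10 g11 g12 g13 g14 g15 g16 g17 g18 g19)
    using gnz A0 B0 C0 D0 q0 Z0 W0
    by (simp add: field_simps)
  have i7: "Phi0 (N-1) M (Z*q) (W/q) q = (P*RN*RM/(A*B*C*D)) * ((1-q powi N)*(1-Z)*(1-Z*q)*(1-Z*W)/((1-Z*q powi N)*(1-Z*W*q powi M)))"
    unfolding Phi0_def args
    apply (simp only: diff_0_right add_0_right diff_minus_eq_add add_uminus_conv_diff)?
    apply (simp only: eE sh qpoch2)?
    apply (simp only: idx)?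
    apply (simp only: divide_inverse inverse_mult_distrib)?
    apply (simp only: sp)?
    apply (simp only: qqa qqb)?
    apply (simp only: X Y RN RM A B C D P pw)?
    apply (simp only: g0 g1 g2 g3 g4 g5 g6 g7 g8 g9 g10 g11 g12 g13 g14 g15 g16 g17 g18 g19)
    using gnz A0 B0 C0 D0 q0 Z0 W0
    by (simp add: field_simps)
  have i8: "Phi0 (N-1) (M-1) Z (W*q) q = (P*RN*RM/(A*B*C*D)) * ((1-q powi N)*(1-q powi M)*(1-Z)*(1-W)*(1-W*q)*(1-Z*W)*(1-Z*W*q)/((1-Z*W*q powi N)*(1-W*q powi M)*(1-Z*W*q powi M)))"
    unfolding Phi0_def args
    apply (simp only: diff_0_right add_0_right diff_minus_eq_add add_uminus_conv_diff)?
    apply (simp only: eE sh qpoch2)?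
    apply (simp only: idx)?
    apply (simp only: divide_inverse inverse_mult_distrib)?
    apply (simp only: sp)?
    apply (simp only: qqa qqb)?
    apply (simp only: X Y RN RM A B C D P pw)?
    apply (simp only: g0 g1 g2 g3 g4 g5 g6 g7 g8 g9 g10 g11 g12 g13 g14 g15 g16 g17 g18 g19)
    using gnz A0 B0 C0 D0 q0 Z0 W0
    by (simp add: field_simps)
  have g1ne: "g1 \<noteq> 0" and g0ne: "g0 \<noteq> 0" using gnz by simp_all
  have g17ne: "g12 \<noteq> 0" "g14 \<noteq> 0" "g10 \<noteq> 0" "g5 \<noteq> 0" "g3 \<noteq> 0" "g11 \<noteq> 0" "g13 \<noteq> 0" "g15 \<noteq> 0"
    using gnz by simp_all
  have K0: "g12 * g1 = g2*g7 - W*g17*g4"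
  proof -
    have "(1-W)*(1 - Z*W*(X*Y/q)) = (1 - Z*W*(X/q))*(1-W*Y) - W*(1-Y)*(1 - Z*(X/q))"
      using q0 by (simp add: field_simps; (simp add: algebra_simps)?)
    then show ?thesis by (simp only: g0 g1 g2 g3 g4 g5 g6 g7 g8 g9 g10 g11 g12 g13 g14 g15 g16 g17 g18 g19)
  qed
  have K1: "g14 * g1 = g2*g9 - Z*W*g18*g17"
  proof -
    have "(1-Z*W)*(1 - Z*W*(X*Y/q)) = (1 - Z*W*(X/q))*(1-Z*W*Y) - Z*W*(1-X/q)*(1-Y)"
      using q0 by (simp add: field_simps; (simp add: algebra_simps)?)
    then show ?thesis by (simp only: g0 g1 g2 g3 g4 g5 g6 g7 g8 g9 g10 g11 g12 g13 g14 g15 g16 g17 g18 g19)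
  qed
  have K2: "g10 * g1 = g4*g9 - Z*g18*g7"
  proof -
    have "(1-Z)*(1 - Z*W*(X*Y/q)) = (1 - Z*(X/q))*(1-Z*W*Y) - Z*(1-X/q)*(1-W*Y)"
      using q0 by (simp add: field_simps; (simp add: algebra_simps)?)
    then show ?thesis by (simp only: g0 g1 g2 g3 g4 g5 g6 g7 g8 g9 g10 g11 g12 g13 g14 g15 g16 g17 g18 g19)
  qed
  have d0: "g2*g7 - W*g17*g4 \<noteq> 0" using K0 g1ne g17ne by (metis mult_eq_0_iff)
  have d1: "g2*g9 - Z*W*g18*g17 \<noteq> 0" using K1 g1ne g17ne by (metis mult_eq_0_iff)
  have d2: "g4*g9 - Z*g18*g7 \<noteq> 0" using K2 g1ne g17ne by (metis mult_eq_0_iff)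
  have G0: "g1 = (g2*g7 - W*g17*g4) / g12" using K0 g17ne by (simp add: eq_divide_eq mult.commute)
  obtain dd0 where dd0: "g2*g7 - W*g17*g4 = dd0" by blast
  have Gd0: "g1 = dd0 / g12" using G0 dd0 by simp
  have dd0ne: "dd0 \<noteq> 0" using d0 dd0 by simp
  have G1: "g1 = (g2*g9 - Z*W*g18*g17) / g14" using K1 g17ne by (simp add: eq_divide_eq mult.commute)
  obtain dd1 where dd1: "g2*g9 - Z*W*g18*g17 = dd1" by blast
  have Gd1: "g1 = dd1 / g14" using G1 dd1 by simp
  have dd1ne: "dd1 \<noteq> 0" using d1 dd1 by simp
  have G2: "g1 = (g4*g9 - Z*g18*g7) / g10" using K2 g17ne by (simp add: eq_divide_eq mult.commute)
  obtain dd2 where dd2: "g4*g9 - Z*g18*g7 = dd2" by blast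
  have Gd2: "g1 = dd2 / g10" using G2 dd2 by simp
  have dd2ne: "dd2 \<noteq> 0" using d2 dd2 by simp
  have c0: "(Phi0y N M 0 0 0 (Z/q) (W/q) q - W * Phi0y N M 0 1 (-1) (Z/q) (W/q) q) * g0
      = Phi0 N M (Z/q) W q * g3"
    unfolding i0 i1 i6
    apply (simp only: X Y pw)
    apply (simp only: g0 g1 g2 g3 g4 g5 g6 g7 g8 g9 g10 g11 g12 g13 g14 g15 g16 g17 g18 g19)
    apply (simp only: Gd0)
    using gnz A0 B0 C0 D0 q0 Z0 W0 dd0ne
    apply (simp add: field_simps)
    apply (simp only: dd0[symmetric])
    by (simp add: algebra_simps power2_eq_square)
  have c1: "(- Z * Phi0y N M 1 (-1) 0 (Z/q) (W/q) q + Z^2*W*Phi0y N M 2 (-1) (-1) (Z/q) (W/q) q) * g0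
      = - Z * g5 * Phi0 (N-1) M (Z*q) (W/q) q / (g10*g11)"
    unfolding i2 i4 i7
    apply (simp only: X Y pw)
    apply (simp only: g0 g1 g2 g3 g4 g5 g6 g7 g8 g9 g10 g11 g12 g13 g14 g15 g16 g17 g18 g19)
    apply (simp only: Gd1)
    using gnz A0 B0 C0 D0 q0 Z0 W0 dd1ne
    apply (simp add: field_simps)
    apply (simp only: dd1[symmetric])
    by (simp add: algebra_simps power2_eq_square)
  have c2: "(Z*W^2*Phi0y N M 1 1 (-2) (Z/q) (W/q) q - Z^2*W^2*Phi0y N M 2 0 (-2) (Z/q) (W/q) q) * g0
      = Z*W^2*g19*Phi0 (N-1) (M-1) Z (W*q) q / (g12*g13*g14*g15)"
    unfolding i3 i5 i8
    apply (simp only: X Y pw)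
    apply (simp only: g0 g1 g2 g3 g4 g5 g6 g7 g8 g9 g10 g11 g12 g13 g14 g15 g16 g17 g18 g19)
    apply (simp only: Gd2)
    using gnz A0 B0 C0 D0 q0 Z0 W0 dd2ne
    apply (simp add: field_simps)
    apply (simp only: dd2[symmetric])
    by (simp add: algebra_simps power2_eq_square)
  obtain p0 where p0: "Phi0y N M 0 0 0 (Z/q) (W/q) q = p0" by blast
  obtain p1 where p1: "Phi0y N M 0 1 (-1) (Z/q) (W/q) q = p1" by blast
  obtain p2 where p2: "Phi0y N M 1 (-1) 0 (Z/q) (W/q) q = p2" by blast
  obtain p3 where p3: "Phi0y N M 1 1 (-2) (Z/q) (W/q) q = p3" by blast
  obtain p4 where p4: "Phi0y N M 2 (-1) (-1) (Z/q) (W/q) q = p4" by blast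
  obtain p5 where p5: "Phi0y N M 2 0 (-2) (Z/q) (W/q) q = p5" by blast
  obtain p6 where p6: "Phi0 N M (Z/q) W q = p6" by blast
  obtain p7 where p7: "Phi0 (N-1) M (Z*q) (W/q) q = p7" by blast
  obtain p8 where p8: "Phi0 (N-1) (M-1) Z (W*q) q = p8" by blast
  have e0: "p0 = W*p1 + p6*g3/g0" using c0 g0ne unfolding p0 p1 p6 by (simp add: field_simps)
  have h2: "Z * (g0*g10*g11*p2) = Z * (g5*p7 + W*Z*g0*g10*g11*p4)" using c1 g0ne g17ne Z0 unfolding p2 p4 p7
    by (simp add: field_simps power2_eq_square; (simp add: algebra_simps)?)
  have h2': "g0*g10*g11*p2 = g5*p7 + W*Z*g0*g10*g11*p4" using h2 Z0 by simp
  have e2: "p2 = Z*W*p4 + g5*p7/(g10*g11*g0)" using h2' g0ne g17ne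
    by (simp add: field_simps; (simp add: algebra_simps)?)
  have h3: "(Z*W^2) * (g0*g12*g13*g14*g15*p3) = (Z*W^2) * (g19*p8 + Z*g0*g12*g13*g14*g15*p5)" using c2 g0ne g17ne Z0 W0 unfolding p3 p5 p8
    by (simp add: field_simps power2_eq_square; (simp add: algebra_simps power2_eq_square)?)
  have h3': "g0*g12*g13*g14*g15*p3 = g19*p8 + Z*g0*g12*g13*g14*g15*p5" using h3 Z0 W0 by simp
  have e3: "p3 = Z*p5 + g19*p8/(g12*g13*g14*g15*g0)" using h3' g0ne g17ne
    by (simp add: field_simps; (simp add: algebra_simps)?)
  have r0: "1 - Z*W/q = g0" using g0 by (simp add: divide_inverse)
  have r3: "g3 = 1 - Z*W*(Y/q)" "g5 = 1 - W*(Y/q)" "g19 = 1 - Y/q"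
    "(1-Z) = g10" "1 - Z*q = g11" "1 - W = g12" "1 - W*q = g13" "1 - Z*W = g14" "1 - Z*W*q = g15"
    using g3 g5 g19 g10 g11 g12 g13 g14 g15 by simp_all
  show ?thesis
    unfolding PhiCD_expand PhiUV_def qpoch2 uu p0 p1 p2 p3 p4 p5 p6 p7 p8 r0 pw e0 e2 e3
    unfolding r3
    using g0ne g17ne q0 Z0 W0
    by (simp add: field_simps; (simp add: algebra_simps power2_eq_square)?)
qed


lemma qpoch_zq:
  assumes g: "gen a q" and q: "q \<noteq> 0"
  shows "qpoch (a*q) q k = qpoch a q k * (1 - a * q powi k) / (1 - a)"
  using qpoch_shift[OF g q, of k] qpoch_succ[OF g q, of k] by simp

lemma qpoch_zdq:
  assumes g: "gen a q" and q: "q \<noteq> 0"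
  shows "qpoch (a/q) q k = (1 - a/q) * qpoch a q k / (1 - a * q powi (k - 1))"
proof -
  have g': "gen (a/q) q" using gen_mult[OF g q, of "-1"] by (simp add: divide_inverse)
  have "qpoch (a/q*q) q (k-1) = qpoch (a/q) q k / (1 - a/q)"
    using qpoch_shift[OF g' q, of "k-1"] by simp
  moreover have "a/q*q = a" using q by simp
  moreover have "1 - a/q \<noteq> 0" using gen_one[OF g'] by simp
  ultimately have "qpoch (a/q) q k = (1 - a/q) * qpoch a q (k-1)" by (simp add: field_simps)
  then show ?thesis using qpoch_pred[OF g q, of k] by simp
qed

theorem corollary4p10:
  fixes n m y1 y2 y3 :: int and u v z w q :: complex
  assumes hy: "y1 + y2 + y3 = 0"
    and hq0: "q \<noteq> 0"
    and hq: "\<And>k::int. k \<noteq> 0 \<Longrightarrow> q powi k \<noteq> 1"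
    and hz0: "z \<noteq> 0" and hw0: "w \<noteq> 0"
    and hz: "\<And>k::int. z * q powi k \<noteq> 1"
    and hw: "\<And>k::int. w * q powi k \<noteq> 1"
    and hzw: "\<And>k::int. z * w * q powi k \<noteq> 1"
  shows "PhiCDy u v 1 1 n m y1 y2 y3 z w q =
           Delta y1 y2 y3 z w q *
           (PhiUVy u v n m y1 y2 y3 z w q
            - z * w * q powi (m + y1 - 1) *
              PhiUVy (u * q powi (-(y1-y2)) / z) (v * q powi (-(y2-y3)) / w) n m y1 y2 y3 z w q)
           / (1 - z * w / q)"
proof -
  have gz: "gen z q" using hz unfolding gen_def by blast
  have gw: "gen w q" using hw unfolding gen_def by blast
  have gzw: "gen (z*w) q" using hzw unfolding gen_def by blast
  obtain Z where Z: "z * q powi (y1-y2) = Z" by blast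
  obtain W where W: "w * q powi (y2-y3) = W" by blast
  obtain N where N: "n - y1 = N" by blast
  obtain M where M: "m - y1 - y2 = M" by blast
  have ZW: "z * w * q powi (y1 - y3) = Z * W" using Z W hq0
    by (auto simp: power_int_add[symmetric] mult_ac)
  have gZ: "gen Z q" using gen_mult[OF gz hq0, of "y1-y2"] Z by simp
  have gW: "gen W q" using gen_mult[OF gw hq0, of "y2-y3"] W by simp
  have gZW: "gen (Z*W) q" using gen_mult[OF gzw hq0, of "y1-y3"] ZW by simp
  have Z0: "Z \<noteq> 0" using Z hz0 hq0 by auto
  have W0: "W \<noteq> 0" using W hw0 hq0 by auto
  have core: "PhiCD u v 1 1 N M Z W q * (1 - Z*W/q) =
         PhiUV u v N M Z W q - Z*W*q powi (M-1) * PhiUV (u/Z) (v/W) N M Z W q"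
    by (rule core2[OF hq0 hq gZ gW gZW Z0 W0])
  have uarg: "u * q powi (-(y1-y2)) / z = u/Z" "v * q powi (-(y2-y3)) / w = v/W"
  proof -
    have p1: "q powi (y1-y2) \<noteq> 0" "q powi (y2-y3) \<noteq> 0" using hq0 by simp_all
    show "u * q powi (-(y1-y2)) / z = u/Z" unfolding Z[symmetric] power_int_minus using p1 hz0 by (simp add: field_simps)
    show "v * q powi (-(y2-y3)) / w = v/W" unfolding W[symmetric] power_int_minus using p1 hw0 by (simp add: field_simps)
  qed
  have mpow: "z * w * q powi (m + y1 - 1) = Z * W * q powi (M - 1)"
  proof -
    have e: "m + y1 - 1 = (y1 - y3) + (M - 1)" using M hy by simp
    have "q powi (m + y1 - 1) = q powi ((y1 - y3) + (M - 1))" by (simp only: e)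
    also have "\<dots> = q powi (y1 - y3) * q powi (M - 1)" by (rule power_int_add) (simp add: hq0)
    finally have "q powi (m + y1 - 1) = q powi (y1 - y3) * q powi (M - 1)" .
    then show ?thesis using ZW by (simp add: mult_ac)
  qed
  obtain a where a: "qpoch z q (y1-y2) = a" by blast
  obtain b where b: "qpoch w q (y2-y3) = b" by blast
  obtain c where c: "qpoch (z*w) q (y1-y3) = c" by blast
  have a0: "a \<noteq> 0" using a qpoch_nz[OF gz hq0] by blast
  have b0: "b \<noteq> 0" using b qpoch_nz[OF gw hq0] by blast
  have c0: "c \<noteq> 0" using c qpoch_nz[OF gzw hq0] by blast
  have q1: "qpoch (z*q) q (y1-y2) = a * (1 - Z) / (1 - z)"
    using qpoch_zq[OF gz hq0, of "y1-y2"] a Z by simp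
  have q2: "qpoch (w*q) q (y2-y3) = b * (1 - W) / (1 - w)"
    using qpoch_zq[OF gw hq0, of "y2-y3"] b W by simp
  have q3: "qpoch (z*w*q) q (y1-y3) = c * (1 - Z*W) / (1 - z*w)"
    using qpoch_zq[OF gzw hq0, of "y1-y3"] c ZW by simp
  have ZWq: "z * w * q powi (y1 - y3 - 1) = Z*W/q"
  proof -
    have "q powi (y1 - y3 - 1) = q powi (y1-y3) / q" using hq0 by (simp add: power_int_diff)
    then have "z * w * q powi (y1 - y3 - 1) = (z * w * q powi (y1-y3)) / q" by simp
    then show ?thesis using ZW by simp
  qed
  have q4: "qpoch (z*w/q) q (y1-y3) = (1 - z*w/q) * c / (1 - Z*W/q)"
    using qpoch_zdq[OF gzw hq0, of "y1-y3"] c ZWq by simp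
  have dl: "(1 - z * q powi (y1-y2)) * (1 - w * q powi (y2-y3)) * (1 - z*w * q powi (y1-y3)) =
            (1 - Z) * (1 - W) * (1 - Z*W)" using Z W ZW by simp
  obtain K where K: "PhiCD u v 1 1 N M Z W q = K" by blast
  obtain U1 where U1: "PhiUV u v N M Z W q = U1" by blast
  obtain U2 where U2: "PhiUV (u/Z) (v/W) N M Z W q = U2" by blast
  obtain t where t: "Z*W*q powi (M-1) = t" by blast
  obtain h where h: "1 - Z*W/q = h" by blast
  obtain h' where h': "1 - z*w/q = h'" by blast
  have hne: "h \<noteq> 0" "h' \<noteq> 0"
    using gen_nz[OF gZW, of "-1"] gen_nz[OF gzw, of "-1"] h h' by (auto simp: power_int_minus divide_inverse)
  obtain e1 e2 e3 f1 f2 f3 where e: "1 - z = e1" "1 - w = e2" "1 - z*w = e3" "1 - Z = f1" "1 - W = f2" "1 - Z*W = f3"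
    by blast
  have ene: "e1 \<noteq> 0" "e2 \<noteq> 0" "e3 \<noteq> 0" "f1 \<noteq> 0" "f2 \<noteq> 0" "f3 \<noteq> 0"
    using gen_nz[OF gz, of 0] gen_nz[OF gw, of 0] gen_nz[OF gzw, of 0]
      gen_nz[OF gZ, of 0] gen_nz[OF gW, of 0] gen_nz[OF gZW, of 0] e by auto
  have U1e: "U1 = K * h + t * U2" using core unfolding K U1 U2 t h by simp
  show ?thesis
    unfolding PhiCDy_def PhiUVy_def Delta_def uarg mpow
    unfolding ZW Z W N M q1 q2 q3 q4 a b c K U1 U2 t h h' e U1e
    using a0 b0 c0 hne ene
    by (simp add: field_simps)
qed

end
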